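(* Let $H\in(1/2,1)$, $T>0$, and let $S^H$ be a sub-fractional Brownian motion with index $H$. Then for every $\delta\in(0,T/2]$, $$\sup_{\delta\le s\le T-\delta}\sup_{0<h\le\delta}\Big|\frac{\sigma^2_{S^H}(s,s+h)}{h^{2H}}-1\Big|\ge H(2H-1)(2^{2H-1}-1)\,3^{2H-2}>0.$$
   Context: A sub-fractional Brownian motion with index $H\in(0,1)$ is a mean zero Gaussian process $(S^H_t)_{t\ge0}$ with covariance $G_H(s,t)=s^{2H}+t^{2H}-\tfrac12[(s+t)^{2H}+|s-t|^{2H}]$; its incremental variance is $\sigma^2_{S^H}(s,t)=\mathbb{E}|S^H_t-S^H_s|^2=|t-s|^{2H}+(s+t)^{2H}-2^{2H-1}(t^{2H}+s^{2H})$. *)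

theory Defs
  imports Complex_Main
begin

text \<open>Incremental variance of a sub-fractional Brownian motion with index H:
  sigma^2(s,t) = E|S_t - S_s|^2 = |t-s|^(2H) + (s+t)^(2H) - 2^(2H-1) (t^(2H) + s^(2H)).\<close>
definition sfbm_incr_var :: "real \<Rightarrow> real \<Rightarrow> real \<Rightarrow> real" where
  "sfbm_incr_var H s t = \<bar>t - s\<bar> powr (2*H) + (s + t) powr (2*H)
      - 2 powr (2*H - 1) * (t powr (2*H) + s powr (2*H))"

end

theory Submission
  imports Defs "HOL-Analysis.Analysis"
begin

lemma deriv_plus: "0 < m + u \<Longrightarrow> ((\<lambda>u. (m+u) powr r) has_real_derivative r * (m+u) powr (r-1)) (at u)"
  by (auto intro!: derivative_eq_intros)
lemma deriv_minus: "0 < m - u \<Longrightarrow> ((\<lambda>u. (m-u) powr r) has_real_derivative - (r * (m-u) powr (r-1))) (at u)"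
  by (auto intro!: derivative_eq_intros)

lemma chi_lower:
  fixes p m t L :: real
  assumes "1 < p" "0 \<le> t" "t < m" "\<And>x. m - t \<le> x \<Longrightarrow> x \<le> m + t \<Longrightarrow> L \<le> x powr (p-2)"
  shows "2*(p-1)*L*t \<le> (m+t) powr (p-1) - (m-t) powr (p-1)"
proof -
  let ?f = "\<lambda>u. (m+u) powr (p-1) - (m-u) powr (p-1) - 2*(p-1)*L*u"
  have "?f 0 \<le> ?f t"
  proof (rule DERIV_nonneg_imp_nondecreasing[OF assms(2)])
    fix u assume u: "0 \<le> u" "u \<le> t"
    have d: "(?f has_real_derivative (p-1)*(m+u) powr (p-2) + (p-1)*(m-u) powr (p-2) - 2*(p-1)*L) (at u)"
      using deriv_plus[of m u "p-1"] deriv_minus[of m u "p-1"] u assms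
      by (auto intro!: derivative_eq_intros)
    have "L \<le> (m+u) powr (p-2)" "L \<le> (m-u) powr (p-2)" using assms(4) u by auto
    hence "(p-1)*L \<le> (p-1)*(m+u) powr (p-2)" "(p-1)*L \<le> (p-1)*(m-u) powr (p-2)"
      using assms(1) by (auto intro: mult_left_mono)
    hence "0 \<le> (p-1)*(m+u) powr (p-2) + (p-1)*(m-u) powr (p-2) - 2*(p-1)*L" by linarith
    with d show "\<exists>y. (?f has_real_derivative y) (at u) \<and> 0 \<le> y" by blast
  qed
  thus ?thesis by simp
qed

lemma chi_upper:
  fixes p m t U :: real
  assumes "1 < p" "0 \<le> t" "t < m" "\<And>x. m - t \<le> x \<Longrightarrow> x \<le> m + t \<Longrightarrow> x powr (p-2) \<le> U"
  shows "(m+t) powr (p-1) - (m-t) powr (p-1) \<le> 2*(p-1)*U*t"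
proof -
  let ?f = "\<lambda>u. (m+u) powr (p-1) - (m-u) powr (p-1) - 2*(p-1)*U*u"
  have "?f t \<le> ?f 0"
  proof (rule DERIV_nonpos_imp_nonincreasing[OF assms(2)])
    fix u assume u: "0 \<le> u" "u \<le> t"
    have d: "(?f has_real_derivative (p-1)*(m+u) powr (p-2) + (p-1)*(m-u) powr (p-2) - 2*(p-1)*U) (at u)"
      using deriv_plus[of m u "p-1"] deriv_minus[of m u "p-1"] u assms
      by (auto intro!: derivative_eq_intros)
    have "(m+u) powr (p-2) \<le> U" "(m-u) powr (p-2) \<le> U" using assms(4) u by auto
    hence "(p-1)*(m+u) powr (p-2) \<le> (p-1)*U" "(p-1)*(m-u) powr (p-2) \<le> (p-1)*U"
      using assms(1) by (auto intro: mult_left_mono)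
    hence "(p-1)*(m+u) powr (p-2) + (p-1)*(m-u) powr (p-2) - 2*(p-1)*U \<le> 0" by linarith
    with d show "\<exists>y. (?f has_real_derivative y) (at u) \<and> y \<le> 0" by blast
  qed
  thus ?thesis by simp
qed

lemma psi_lower:
  fixes p m d L :: real
  assumes "1 < p" "0 \<le> d" "d < m" "\<And>x. m - d \<le> x \<Longrightarrow> x \<le> m + d \<Longrightarrow> L \<le> x powr (p-2)"
  shows "p*(p-1)*L*d^2 \<le> (m+d) powr p + (m-d) powr p - 2 * m powr p"
proof -
  let ?f = "\<lambda>u. (m+u) powr p + (m-u) powr p - 2 * m powr p - p*(p-1)*L*u^2"
  have "?f 0 \<le> ?f d"
  proof (rule DERIV_nonneg_imp_nondecreasing[OF assms(2)])
    fix u assume u: "0 \<le> u" "u \<le> d"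
    have d: "(?f has_real_derivative p*((m+u) powr (p-1) - (m-u) powr (p-1)) - p*(2*(p-1)*L*u)) (at u)"
      using deriv_plus[of m u "p"] deriv_minus[of m u "p"] u assms
      by (auto intro!: derivative_eq_intros simp: algebra_simps)
    have "2*(p-1)*L*u \<le> (m+u) powr (p-1) - (m-u) powr (p-1)"
      using chi_lower[of p u m L] assms u by auto
    hence "0 \<le> p*((m+u) powr (p-1) - (m-u) powr (p-1)) - p*(2*(p-1)*L*u)"
      using assms(1) by (smt (verit) mult_left_mono)
    with d show "\<exists>y. (?f has_real_derivative y) (at u) \<and> 0 \<le> y" by blast
  qed
  thus ?thesis by simp
qed

lemma psi_upper:
  fixes p m d U :: real
  assumes "1 < p" "0 \<le> d" "d < m" "\<And>x. m - d \<le> x \<Longrightarrow> x \<le> m + d \<Longrightarrow> x powr (p-2) \<le> U"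
  shows "(m+d) powr p + (m-d) powr p - 2 * m powr p \<le> p*(p-1)*U*d^2"
proof -
  let ?f = "\<lambda>u. (m+u) powr p + (m-u) powr p - 2 * m powr p - p*(p-1)*U*u^2"
  have "?f d \<le> ?f 0"
  proof (rule DERIV_nonpos_imp_nonincreasing[OF assms(2)])
    fix u assume u: "0 \<le> u" "u \<le> d"
    have d: "(?f has_real_derivative p*((m+u) powr (p-1) - (m-u) powr (p-1)) - p*(2*(p-1)*U*u)) (at u)"
      using deriv_plus[of m u "p"] deriv_minus[of m u "p"] u assms
      by (auto intro!: derivative_eq_intros simp: algebra_simps)
    have "(m+u) powr (p-1) - (m-u) powr (p-1) \<le> 2*(p-1)*U*u"
      using chi_upper[of p u m U] assms u by auto
    hence "p*((m+u) powr (p-1) - (m-u) powr (p-1)) - p*(2*(p-1)*U*u) \<le> 0"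
      using assms(1) by (smt (verit) mult_left_mono)
    with d show "\<exists>y. (?f has_real_derivative y) (at u) \<and> y \<le> 0" by blast
  qed
  thus ?thesis by simp
qed

lemma D_bounds:
  fixes p s h :: real
  assumes "1 < p" "p < 2" "0 < s" "0 < h"
  shows "p*(p-1)*((s+h) powr (p-2))*((h/2)^2) \<le> (s+h) powr p + s powr p - 2*(s+h/2) powr p"
    and "(s+h) powr p + s powr p - 2*(s+h/2) powr p \<le> p*(p-1)*(s powr (p-2))*((h/2)^2)"
proof -
  have e1: "s+h/2 + h/2 = s+h" "s+h/2-h/2 = s" by auto
  show "p*(p-1)*((s+h) powr (p-2))*((h/2)^2) \<le> (s+h) powr p + s powr p - 2*(s+h/2) powr p"
  proof -
    have "\<And>x. s \<le> x \<Longrightarrow> x \<le> s+h \<Longrightarrow> (s+h) powr (p-2) \<le> x powr (p-2)"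
      by (rule powr_mono2') (use assms in auto)
    thus ?thesis using psi_lower[of p "h/2" "s+h/2" "(s+h) powr (p-2)"] assms by (auto simp: e1)
  qed
  show "(s+h) powr p + s powr p - 2*(s+h/2) powr p \<le> p*(p-1)*(s powr (p-2))*((h/2)^2)"
  proof -
    have "\<And>x. s \<le> x \<Longrightarrow> x \<le> s+h \<Longrightarrow> x powr (p-2) \<le> s powr (p-2)"
      by (rule powr_mono2') (use assms in auto)
    thus ?thesis using psi_upper[of p "h/2" "s+h/2" "s powr (p-2)"] assms by (auto simp: e1)
  qed
qed

lemma absf:
  fixes H s h :: real
  assumes "0 < s" "0 < h" "0 \<le> (s+h) powr (2*H) + s powr (2*H) - 2*(s+h/2) powr (2*H)"
  shows "\<bar>sfbm_incr_var H s (s+h) / h powr (2*H) - 1\<bar>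
     = 2 powr (2*H-1) * ((s+h) powr (2*H) + s powr (2*H) - 2*(s+h/2) powr (2*H)) / h powr (2*H)"
proof -
  let ?p = "2*H"
  have a: "(s+s+h) powr ?p = 2 * 2 powr (?p-1) * (s+h/2) powr ?p"
  proof -
    have "(s+s+h) = 2*(s+h/2)" by simp
    hence "(s+s+h) powr ?p = 2 powr ?p * (s+h/2) powr ?p" using assms powr_mult[of 2 "s+h/2" ?p] by simp
    moreover have "2 powr ?p = 2 * 2 powr (?p - 1)" by (simp add: powr_diff)
    ultimately show ?thesis by simp
  qed
  have hp: "h powr ?p > 0" using assms by simp
  have "sfbm_incr_var H s (s+h) = h powr ?p - 2 powr (?p-1) * ((s+h) powr ?p + s powr ?p - 2*(s+h/2) powr ?p)"
    unfolding sfbm_incr_var_def using assms a by (simp add: algebra_simps)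
  hence "sfbm_incr_var H s (s+h) / h powr ?p - 1 = - (2 powr (?p-1) * ((s+h) powr ?p + s powr ?p - 2*(s+h/2) powr ?p) / h powr ?p)"
    using hp by (simp only: diff_divide_distrib) simp
  moreover have "0 \<le> 2 powr (?p-1) * ((s+h) powr ?p + s powr ?p - 2*(s+h/2) powr ?p) / h powr ?p"
    using assms hp by simp
  ultimately show ?thesis by (metis abs_minus_cancel abs_of_nonneg)
qed

lemma const_ineq:
  fixes q :: real
  assumes "0 < q" "q < 1"
  shows "2 powr q - 1 \<le> (4/3) powr (q-1)"
proof -
  have "2 powr q = exp ((1-q) *\<^sub>R 0 + q *\<^sub>R ln 2)" by (simp add: powr_def)
  also have "\<dots> \<le> (1-q) * exp 0 + q * exp (ln 2)"
    using convex_onD[OF exp_convex, of q 0 "ln 2"] assms by simp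
  finally have c1: "2 powr q \<le> 1 + q" by simp
  have "ln (4/3::real) \<le> 4/3 - 1" by (rule ln_le_minus_one) auto
  hence "(q-1) * ln (4/3) \<ge> (q-1) * (1/3)" using assms by (intro mult_left_mono_neg) auto
  moreover have "(4/3::real) powr (q-1) = exp ((q-1) * ln (4/3))" by (simp add: powr_def)
  moreover have "exp ((q-1) * ln (4/3::real)) \<ge> 1 + (q-1) * ln (4/3)" by (rule exp_ge_add_one_self)
  ultimately have "(4/3::real) powr (q-1) \<ge> 1 + (q-1)/3" by linarith
  moreover have "1 + (q-1)/3 \<ge> q" using assms by (simp add: field_simps)
  ultimately show ?thesis using c1 by linarith
qed

lemma lower_at:
  fixes p d :: real
  assumes "1 < p" "p < 2" "0 < d"
  shows "2 powr (p-1) * ((d+d) powr p + d powr p - 2*(d+d/2) powr p) / d powr p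
         \<ge> p*(p-1)*(2 powr (p-1) * 2 powr (p-2) / 4)"
proof -
  have D: "p*(p-1)*((d+d) powr (p-2))*((d/2)^2) \<le> (d+d) powr p + d powr p - 2*(d+d/2) powr p"
    using D_bounds(1)[of p d d] assms by auto
  have "(d+d) powr (p-2) = 2 powr (p-2) * d powr (p-2)"
    using powr_mult[of 2 d "p-2"] assms by (simp add: mult_2[symmetric])
  moreover have "d powr (p-2) * d^2 = d powr p"
  proof -
    have "d^2 = d powr 2" using assms by (simp add: powr_numeral)
    moreover have "d powr (p-2) * d powr 2 = d powr (p-2+2)" by (rule powr_add[symmetric])
    ultimately show ?thesis by simp
  qed
  ultimately have e: "p*(p-1)*((d+d) powr (p-2))*((d/2)^2) = p*(p-1)*2 powr (p-2)/4 * d powr p"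
  proof -
    assume A: "(d+d) powr (p-2) = 2 powr (p-2) * d powr (p-2)" and B: "d powr (p-2) * d^2 = d powr p"
    have "p*(p-1)*((d+d) powr (p-2))*((d/2)^2) = p*(p-1)*2 powr (p-2)/4 * (d powr (p-2) * d^2)"
      unfolding A by (simp add: power_divide)
    thus ?thesis unfolding B .
  qed
  have dp: "d powr p > 0" using assms by simp
  have "2 powr (p-1) * (p*(p-1)*2 powr (p-2)/4 * d powr p) / d powr p
       \<le> 2 powr (p-1) * ((d+d) powr p + d powr p - 2*(d+d/2) powr p) / d powr p"
  proof -
    have D': "p*(p-1)*2 powr (p-2)/4 * d powr p \<le> (d+d) powr p + d powr p - 2*(d+d/2) powr p"
      using D unfolding e .
    show ?thesis by (rule divide_right_mono[OF mult_left_mono[OF D']]) (use dp in auto)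
  qed
  moreover have "2 powr (p-1) * (p*(p-1)*2 powr (p-2)/4 * d powr p) / d powr p = p*(p-1)*(2 powr (p-1) * 2 powr (p-2) / 4)"
    using dp by (simp add: field_simps)
  ultimately show ?thesis by linarith
qed

lemma upper_all:
  fixes p s h :: real
  assumes "1 < p" "p < 2" "0 < h" "h \<le> s"
  shows "2 powr (p-1) * ((s+h) powr p + s powr p - 2*(s+h/2) powr p) / h powr p
         \<le> 2 powr (p-1) * p * (p-1) / 4"
proof -
  have s0: "0 < s" using assms by simp
  have D: "(s+h) powr p + s powr p - 2*(s+h/2) powr p \<le> p*(p-1)*(s powr (p-2))*((h/2)^2)"
    using D_bounds(2)[of p s h] assms s0 by auto
  have hp: "h powr p > 0" using assms by simp
  have h2: "h^2 / h powr p = h powr (2-p)"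
  proof -
    have "h^2 = h powr 2" using assms by (simp add: powr_numeral)
    thus ?thesis using assms by (simp add: powr_diff)
  qed
  have "h powr (2-p) \<le> s powr (2-p)" using assms by (intro powr_mono2) auto
  hence "s powr (p-2) * h powr (2-p) \<le> s powr (p-2) * s powr (2-p)" by (intro mult_left_mono) auto
  also have "\<dots> = 1" using s0 by (simp add: powr_add[symmetric])
  finally have r: "s powr (p-2) * (h^2 / h powr p) \<le> 1" using h2 by simp
  have "2 powr (p-1) * ((s+h) powr p + s powr p - 2*(s+h/2) powr p) / h powr p
       \<le> 2 powr (p-1) * (p*(p-1)*(s powr (p-2))*((h/2)^2)) / h powr p"
    using D hp by (intro divide_right_mono mult_left_mono) auto
  also have "\<dots> = 2 powr (p-1) * p * (p-1) / 4 * (s powr (p-2) * (h^2 / h powr p))"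
    by (simp add: power_divide field_simps)
  also have "\<dots> \<le> 2 powr (p-1) * p * (p-1) / 4"
    using r assms by (intro mult_left_le) auto
  finally show ?thesis .
qed

theorem mainTheorem11:
  fixes H T \<delta> :: real
  assumes "1/2 < H" "H < 1" "T > 0" "0 < \<delta>" "\<delta> \<le> T/2"
  shows "(SUP s\<in>{\<delta>..T-\<delta>}. SUP h\<in>{0<..\<delta>}.
            \<bar>sfbm_incr_var H s (s+h) / h powr (2*H) - 1\<bar>)
           \<ge> H*(2*H-1)*(2 powr (2*H-1) - 1) * 3 powr (2*H-2)
         \<and> H*(2*H-1)*(2 powr (2*H-1) - 1) * 3 powr (2*H-2) > 0"
proof -
  define f where "f s h = \<bar>sfbm_incr_var H s (s+h) / h powr (2*H) - 1\<bar>" for s h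
  define B where "B = 2 powr (2*H-1) * (2*H) * (2*H-1) / 4"
  define c where "c = H*(2*H-1)*(2 powr (2*H-1) - 1) * 3 powr (2*H-2)"
  have p1: "1 < 2*H" and p2: "2*H < 2" using assms by auto
  have fe: "f s h = 2 powr (2*H-1) * ((s+h) powr (2*H) + s powr (2*H) - 2*(s+h/2) powr (2*H)) / h powr (2*H)"
    if "0 < s" "0 < h" for s h
  proof -
    have "0 \<le> 2*H*(2*H-1)*((s+h) powr (2*H-2))*((h/2)^2)" using p1 by simp
    hence "0 \<le> (s+h) powr (2*H) + s powr (2*H) - 2*(s+h/2) powr (2*H)"
      using D_bounds(1)[of "2*H" s h] p1 p2 that by linarith
    thus ?thesis unfolding f_def using absf[of s h H] that by simp
  qed
  have fB: "f s h \<le> B" if "\<delta> \<le> s" "0 < h" "h \<le> \<delta>" for s h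
    using fe[of s h] upper_all[of "2*H" h s] that p1 p2 assms unfolding B_def by auto
  have inner_le: "(SUP h\<in>{0<..\<delta>}. f s h) \<le> B" if "s \<in> {\<delta>..T-\<delta>}" for s
    by (rule cSUP_least) (use assms that fB in auto)
  have bdd_out: "bdd_above ((\<lambda>s. SUP h\<in>{0<..\<delta>}. f s h) ` {\<delta>..T-\<delta>})"
    using inner_le by (intro bdd_aboveI2) auto
  have bdd_in: "bdd_above ((\<lambda>h. f \<delta> h) ` {0<..\<delta>})"
    using fB by (intro bdd_aboveI2) auto
  have lowf: "f \<delta> \<delta> \<ge> (2*H)*(2*H-1)*(2 powr (2*H-1) * 2 powr (2*H-2) / 4)"
    using fe[of \<delta> \<delta>] lower_at[of "2*H" \<delta>] p1 p2 assms by simp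
  define q where "q = 2*H - 1"
  have q: "0 < q" "q < 1" using assms unfolding q_def by auto
  have pw: "2 * (2 powr q * 2 powr (q-1) / 4) = 4 powr (q-1)"
  proof -
    have "(4::real) powr (q-1) = 2 powr (q-1) * 2 powr (q-1)"
      using powr_mult[of 2 2 "q-1"] by simp
    moreover have "(2::real) powr q = 2 powr (q-1) * 2"
      using powr_add[of 2 "q-1" 1] by simp
    ultimately show ?thesis by simp
  qed
  have ci: "(2 powr q - 1) * 3 powr (q-1) \<le> 4 powr (q-1)"
  proof -
    have "(2 powr q - 1) * 3 powr (q-1) \<le> (4/3) powr (q-1) * 3 powr (q-1)"
      using const_ineq[OF q] by (intro mult_right_mono) auto
    also have "\<dots> = 4 powr (q-1)" using powr_mult[of "4/3" 3 "q-1"] by simp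
    finally show ?thesis .
  qed
  have Hq: "0 < H * q" using q assms by simp
  have "c = H*q*((2 powr q - 1) * 3 powr (q-1))" unfolding c_def q_def by (simp add: algebra_simps)
  also have "\<dots> \<le> H*q*(4 powr (q-1))" using ci Hq by (intro mult_left_mono) auto
  also have "\<dots> = (2*H)*(2*H-1)*(2 powr (2*H-1) * 2 powr (2*H-2) / 4)"
    using pw unfolding q_def[symmetric] by (simp add: q_def algebra_simps)
  also have "\<dots> \<le> f \<delta> \<delta>" by (rule lowf)
  also have "\<dots> \<le> (SUP h\<in>{0<..\<delta>}. f \<delta> h)"
    by (rule cSUP_upper[OF _ bdd_in]) (use assms in auto)
  also have "\<dots> \<le> (SUP s\<in>{\<delta>..T-\<delta>}. SUP h\<in>{0<..\<delta>}. f s h)"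
    by (rule cSUP_upper[OF _ bdd_out]) (use assms in auto)
  finally have main: "c \<le> (SUP s\<in>{\<delta>..T-\<delta>}. SUP h\<in>{0<..\<delta>}. f s h)" .
  have "1 < 2 powr q" using q by simp
  hence "0 < c" unfolding c_def using Hq q_def by simp
  with main show ?thesis unfolding f_def c_def by simp
qed

end
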